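(* Let $\mathbb{F}$ be an algebraically closed field of characteristic not three and let $(\mathcal{O},* )$ be the Okubo algebra over $\mathbb{F}$. Then any two idempotents of $(\mathcal{O},* )$ (nonzero elements $f$ with $f*f=f$) are conjugate under the automorphism group $\mathrm{Aut}(\mathcal{O},* )$.
   Context: Since $\mathbb{F}$ is algebraically closed of characteristic $\neq 3$, it contains a primitive cube root of unity $\omega$. The Okubo algebra is the vector space $\mathcal{O}=\mathfrak{sl}_3(\mathbb{F})$ of trace-zero $3\times 3$ matrices with multiplication \[ x*y=\omega xy-\omega^2 yx-\frac{\omega-\omega^2}{3}\mathrm{tr}(xy)1, \] where juxtaposition is the usual matrix product. *)

theory Defs
  imports "HOL-Analysis.Analysis" "HOL-Computational_Algebra.Polynomial"
begin

text \<open>The Okubo algebra: trace-zero 3x3 matrices over a field, with the product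
  x * y = w x y - w^2 y x - ((w - w^2)/3) tr(xy) 1, for a primitive cube root of unity w.\<close>

definition msmult :: "'a::field \<Rightarrow> 'a ^ 3 ^ 3 \<Rightarrow> 'a ^ 3 ^ 3" where
  "msmult c A = (\<chi> i j. c * A $ i $ j)"

definition okubo_carrier :: "('a::field ^ 3 ^ 3) set" where
  "okubo_carrier = {x. trace x = 0}"

definition okubo_mult :: "'a::field \<Rightarrow> 'a ^ 3 ^ 3 \<Rightarrow> 'a ^ 3 ^ 3 \<Rightarrow> 'a ^ 3 ^ 3" where
  "okubo_mult w x y =
     msmult w (x ** y) - msmult (w ^ 2) (y ** x) - msmult ((w - w ^ 2) / 3 * trace (x ** y)) (mat 1)"

definition okubo_aut :: "'a::field \<Rightarrow> ('a ^ 3 ^ 3 \<Rightarrow> 'a ^ 3 ^ 3) \<Rightarrow> bool" where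
  "okubo_aut w \<phi> \<longleftrightarrow>
     bij_betw \<phi> okubo_carrier okubo_carrier \<and>
     (\<forall>x\<in>okubo_carrier. \<forall>y\<in>okubo_carrier. \<phi> (x + y) = \<phi> x + \<phi> y) \<and>
     (\<forall>c. \<forall>x\<in>okubo_carrier. \<phi> (msmult c x) = msmult c (\<phi> x)) \<and>
     (\<forall>x\<in>okubo_carrier. \<forall>y\<in>okubo_carrier. \<phi> (okubo_mult w x y) = okubo_mult w (\<phi> x) (\<phi> y))"

definition okubo_idempotent :: "'a::field \<Rightarrow> 'a ^ 3 ^ 3 \<Rightarrow> bool" where
  "okubo_idempotent w f \<longleftrightarrow> f \<in> okubo_carrier \<and> f \<noteq> 0 \<and> okubo_mult w f f = f"

end

theory Submission
  imports Defs
begin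

lemma sc_ch:
  fixes a b c d e f g h i s :: "'a::field"
  assumes t: "a+e+i = 0"
  and q11: "a*a+b*d+c*g = a + s" and q12: "a*b+b*e+c*h = b" and q13: "a*c+b*f+c*i = c"
  and q21: "d*a+e*d+f*g = d" and q22: "d*b+e*e+f*h = e + s" and q23: "d*c+e*f+f*i = f"
  and q31: "g*a+h*d+i*g = g" and q32: "g*b+h*e+i*h = h" and q33: "g*c+h*f+i*i = i + s"
  defines "p \<equiv> 1 + s + (a*e - b*d + a*i - c*g + e*i - f*h)"
  defines "q \<equiv> (a*e*i + b*f*g + c*d*h - a*f*h - b*d*i - c*e*g) - s"
  shows "p*a = q \<and> p*e = q \<and> p*i = q \<and> p*b = 0 \<and> p*c = 0 \<and> p*d = 0 \<and> p*f = 0 \<and> p*g=0 \<and> p*h=0"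
  unfolding p_def q_def using assms(1-10) by algebra

lemma sc_s2:
  fixes a b c d e f g h i s :: "'a::field"
  assumes three: "(3::'a) \<noteq> 0"
  and t: "a+e+i = 0"
  and q11: "a*a+b*d+c*g = a + s" and q12: "a*b+b*e+c*h = b" and q13: "a*c+b*f+c*i = c"
  and q21: "d*a+e*d+f*g = d" and q22: "d*b+e*e+f*h = e + s" and q23: "d*c+e*f+f*i = f"
  and q31: "g*a+h*d+i*g = g" and q32: "g*b+h*e+i*h = h" and q33: "g*c+h*f+i*i = i + s"
  and nz: "\<not> (a=0 \<and> b=0 \<and> c=0 \<and> d=0 \<and> e=0 \<and> f=0 \<and> g=0 \<and> h=0 \<and> i=0)"
  shows "s = 2 \<and> a*e - b*d + a*i - c*g + e*i - f*h = -3"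
proof -
  define p where "p \<equiv> 1 + s + (a*e - b*d + a*i - c*g + e*i - f*h)"
  define q where "q \<equiv> (a*e*i + b*f*g + c*d*h - a*f*h - b*d*i - c*e*g) - s"
  have ch: "p*a = q \<and> p*e = q \<and> p*i = q \<and> p*b = 0 \<and> p*c = 0 \<and> p*d = 0 \<and> p*f = 0 \<and> p*g=0 \<and> p*h=0"
    unfolding p_def q_def by (rule sc_ch[OF t q11 q12 q13 q21 q22 q23 q31 q32 q33])
  have p0: "p = 0"
  proof (rule ccontr)
    assume pn: "p \<noteq> 0"
    have off: "b=0 \<and> c=0 \<and> d=0 \<and> f=0 \<and> g=0 \<and> h=0" using ch pn by simp
    have "a = e" "e = i" using ch pn by (metis mult_left_cancel)+
    then have "3*a = 0" using t by (simp add: algebra_simps)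
    then have "a = 0" using three by simp
    then show False using nz off \<open>a = e\<close> \<open>e = i\<close> by simp
  qed
  have tr: "3 * s + 2*(a*e - b*d + a*i - c*g + e*i - f*h) = 0"
    using assms(2-11) by algebra
  from p0 have "a*e - b*d + a*i - c*g + e*i - f*h = -1 - s" unfolding p_def by (simp add: algebra_simps)
  with tr have "s = 2" by algebra
  then show ?thesis using \<open>a*e - b*d + a*i - c*g + e*i - f*h = -1 - s\<close> by simp
qed

lemma sc_minors:
  fixes a b c d e f g h i :: "'a::field"
  assumes t: "a+e+i = 0"
  and q11: "a*a+b*d+c*g = a + 2" and q12: "a*b+b*e+c*h = b" and q13: "a*c+b*f+c*i = c"
  and q21: "d*a+e*d+f*g = d" and q22: "d*b+e*e+f*h = e + 2" and q23: "d*c+e*f+f*i = f"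
  and q31: "g*a+h*d+i*g = g" and q32: "g*b+h*e+i*h = h" and q33: "g*c+h*f+i*i = i + 2"
  and e2: "a*e - b*d + a*i - c*g + e*i - f*h = -3"
  shows "(a+1)*(e+1) = b*d" "(a+1)*f = c*d" "b*f = c*(e+1)"
        "(a+1)*h = b*g" "(a+1)*(i+1) = c*g" "b*(i+1) = c*h"
        "d*h = (e+1)*g" "d*(i+1) = f*g" "(e+1)*(i+1) = f*h"
  using assms by algebra+


definition D1 :: "'a::field^3^3" where
  "D1 = vector [vector [2,0,0], vector [0,-1,0], vector [0,0,-1]]"

lemma mat3_repr:
  fixes y :: "'a::zero^3^3"
  shows "\<exists>a b c d e f g h i. y = vector [vector [a,b,c], vector [d,e,f], vector [g,h,i]]"
  apply (rule exI[of _ "y$1$1"], rule exI[of _ "y$1$2"], rule exI[of _ "y$1$3"])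
  apply (rule exI[of _ "y$2$1"], rule exI[of _ "y$2$2"], rule exI[of _ "y$2$3"])
  apply (rule exI[of _ "y$3$1"], rule exI[of _ "y$3$2"], rule exI[of _ "y$3$3"])
  by (simp add: vec_eq_iff forall_3)

lemma diag_exists:
  fixes y :: "'a::field^3^3"
  assumes three: "(3::'a) \<noteq> 0" and tr: "trace y = 0"
    and sq: "y ** y = y + msmult s (mat 1)" and nz: "y \<noteq> 0"
  shows "\<exists>S. det S \<noteq> 0 \<and> y ** S = S ** D1"
proof -
  obtain a b c d e f g h i where Y: "y = vector [vector [a,b,c], vector [d,e,f], vector [g,h,i]]"
    using mat3_repr by blast
  have t: "a+e+i = 0" using tr by (simp add: Y trace_def sum_3)
  from sq have "\<forall>p q. (y**y)$p$q = (y + msmult s (mat 1))$p$q" by simp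
  then have Q: "a*a+b*d+c*g = a + s" "a*b+b*e+c*h = b" "a*c+b*f+c*i = c"
   "d*a+e*d+f*g = d" "d*b+e*e+f*h = e + s" "d*c+e*f+f*i = f"
   "g*a+h*d+i*g = g" "g*b+h*e+i*h = h" "g*c+h*f+i*i = i + s"
    by (simp_all add: Y forall_3 matrix_matrix_mult_def sum_3 msmult_def mat_def)
  have nz': "\<not> (a=0 \<and> b=0 \<and> c=0 \<and> d=0 \<and> e=0 \<and> f=0 \<and> g=0 \<and> h=0 \<and> i=0)"
    using nz by (auto simp: Y vec_eq_iff forall_3)
  from sc_s2[OF three t Q nz'] have s2: "s = 2" and e2: "a*e - b*d + a*i - c*g + e*i - f*h = -3"
    by auto
  note Q2 = Q[unfolded s2]
  note M = sc_minors[OF t Q2 e2]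
  have "(9::'a) = 3*3" by simp
  then have nine: "(9::'a) \<noteq> 0" using three by (metis mult_eq_0_iff)
  have "a+1 \<noteq> 0 \<or> e+1 \<noteq> 0 \<or> i+1 \<noteq> 0"
  proof (rule ccontr)
    assume "\<not> ?thesis"
    then have "a+1+(e+1)+(i+1) = 0" by simp
    moreover have "a+1+(e+1)+(i+1) = (a+e+i) + 3" by (simp add: algebra_simps)
    ultimately have "(3::'a) = 0" using t by simp
    with three show False by simp
  qed
  moreover
  { assume k: "a+1 \<noteq> 0"
    define S :: "'a^3^3" where "S = vector [vector [a+1,b,c], vector [d,e-2,f], vector [g,h,i-2]]"
    have dS: "det S = 9*(a+1)" apply (simp add: S_def det_3) using M t by algebra
    have "det S \<noteq> 0" unfolding dS using k nine by (metis mult_eq_0_iff neg_equal_0_iff_equal)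
    moreover have "y ** S = S ** D1"
      apply (simp add: S_def Y D1_def vec_eq_iff forall_3 matrix_matrix_mult_def sum_3)
      apply (insert Q2 t M) apply (intro conjI) by algebra+
    ultimately have ?thesis by blast }
  moreover
  { assume k: "e+1 \<noteq> 0"
    define S :: "'a^3^3" where "S = vector [vector [b,a-2,c], vector [e+1,d,f], vector [h,g,i-2]]"
    have dS: "det S = -9*(e+1)" apply (simp add: S_def det_3) using M t by algebra
    have "det S \<noteq> 0" unfolding dS using k nine by (metis mult_eq_0_iff neg_equal_0_iff_equal)
    moreover have "y ** S = S ** D1"
      apply (simp add: S_def Y D1_def vec_eq_iff forall_3 matrix_matrix_mult_def sum_3)
      apply (insert Q2 t M) apply (intro conjI) by algebra+
    ultimately have ?thesis by blast }
  moreover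
  { assume k: "i+1 \<noteq> 0"
    define S :: "'a^3^3" where "S = vector [vector [c,a-2,b], vector [f,d,e-2], vector [i+1,g,h]]"
    have dS: "det S = 9*(i+1)" apply (simp add: S_def det_3) using M t by algebra
    have "det S \<noteq> 0" unfolding dS using k nine by (metis mult_eq_0_iff neg_equal_0_iff_equal)
    moreover have "y ** S = S ** D1"
      apply (simp add: S_def Y D1_def vec_eq_iff forall_3 matrix_matrix_mult_def sum_3)
      apply (insert Q2 t M) apply (intro conjI) by algebra+
    ultimately have ?thesis by blast }
  ultimately show ?thesis by blast
qed


lemma mm_add_r: "((A::'a::field^3^3) + B) ** C = A ** C + B ** C"
  by (simp add: vec_eq_iff matrix_matrix_mult_def sum.distrib distrib_right)
lemma mm_sub_r: "((A::'a::field^3^3) - B) ** C = A ** C - B ** C"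
  by (simp add: vec_eq_iff matrix_matrix_mult_def sum_subtractf left_diff_distrib)
lemma mm_sub_l: "(C::'a::field^3^3) ** (A - B) = C ** A - C ** B"
  by (simp add: vec_eq_iff matrix_matrix_mult_def sum_subtractf right_diff_distrib)
lemma ms_mult_l: "msmult c ((A::'a::field^3^3) ** B) = msmult c A ** B"
  by (simp add: msmult_def vec_eq_iff matrix_matrix_mult_def sum_distrib_left mult.assoc)
lemma ms_mult_r: "msmult c ((A::'a::field^3^3) ** B) = A ** msmult c B"
  by (simp add: msmult_def vec_eq_iff matrix_matrix_mult_def sum_distrib_left mult.left_commute)
lemma ms_add: "msmult c ((A::'a::field^3^3) + B) = msmult c A + msmult c B"
  by (simp add: msmult_def vec_eq_iff distrib_left)
lemma ms_ms: "msmult c (msmult d (A::'a::field^3^3)) = msmult (c*d) A"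
  by (simp add: msmult_def vec_eq_iff mult.assoc)
lemma ms_diff: "msmult c (A::'a::field^3^3) - msmult d A = msmult (c-d) A"
  by (simp add: msmult_def vec_eq_iff left_diff_distrib)
lemma ms_cancel: "c \<noteq> 0 \<Longrightarrow> msmult c (A::'a::field^3^3) = msmult c B \<Longrightarrow> A = B"
  by (simp add: msmult_def vec_eq_iff)
lemma ms_zero: "c \<noteq> 0 \<Longrightarrow> msmult c (A::'a::field^3^3) = 0 \<longleftrightarrow> A = 0"
  by (auto simp add: msmult_def vec_eq_iff)
lemma trace_ms: "trace (msmult c (A::'a::field^3^3)) = c * trace A"
  by (simp add: msmult_def trace_def sum_distrib_left)

lemma conj_trace:
  assumes "T' ** T = mat 1"
  shows "trace (T ** (x::'a::field^3^3) ** T') = trace x"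
proof -
  have "trace (T ** x ** T') = trace (T' ** (T ** x))" by (rule trace_mul_sym)
  also have "\<dots> = trace x" by (simp add: matrix_mul_assoc assms)
  finally show ?thesis .
qed

lemma conj_mult:
  assumes "T' ** T = mat 1"
  shows "(T ** (x::'a::field^3^3) ** T') ** (T ** y ** T') = T ** (x ** y) ** T'"
proof -
  have "(T ** x ** T') ** (T ** y ** T') = T ** x ** (T' ** T) ** y ** T'"
    by (simp add: matrix_mul_assoc)
  then show ?thesis by (simp add: assms matrix_mul_assoc)
qed

lemma conj_aut:
  fixes T T' :: "'a::field^3^3"
  assumes TT: "T ** T' = mat 1" and TT': "T' ** T = mat 1"
  shows "okubo_aut w (\<lambda>x. T ** x ** T')"
  unfolding okubo_aut_def
proof (intro conjI ballI allI)
  show "bij_betw (\<lambda>x. T ** x ** T') okubo_carrier okubo_carrier"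
  proof (rule bij_betw_byWitness[where f'="\<lambda>x. T' ** x ** T"])
    show "\<forall>a\<in>okubo_carrier. T' ** (T ** a ** T') ** T = a"
      by (simp add: matrix_mul_assoc TT' flip: matrix_mul_assoc[of _ T' T])
    show "\<forall>a\<in>okubo_carrier. T ** (T' ** a ** T) ** T' = a"
      by (simp add: matrix_mul_assoc TT flip: matrix_mul_assoc[of _ T T'])
    show "(\<lambda>x. T ** x ** T') ` okubo_carrier \<subseteq> okubo_carrier"
      using conj_trace[OF TT'] by (auto simp: okubo_carrier_def)
    show "(\<lambda>x. T' ** x ** T) ` okubo_carrier \<subseteq> okubo_carrier"
      using conj_trace[OF TT] by (auto simp: okubo_carrier_def)
  qed
  fix x y :: "'a^3^3" assume "x \<in> okubo_carrier" "y \<in> okubo_carrier"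
  show "T ** (x + y) ** T' = T ** x ** T' + T ** y ** T'"
    by (simp add: matrix_add_ldistrib mm_add_r)
  show "T ** okubo_mult w x y ** T' = okubo_mult w (T ** x ** T') (T ** y ** T')"
    unfolding okubo_mult_def conj_mult[OF TT'] 
    by (simp add: mm_sub_l mm_sub_r conj_trace[OF TT'] TT flip: ms_mult_l ms_mult_r)
next
  fix c x assume "x \<in> (okubo_carrier :: ('a^3^3) set)"
  show "T ** msmult c x ** T' = msmult c (T ** x ** T')"
    by (simp flip: ms_mult_l ms_mult_r)
qed


lemma idem_diag:
  fixes w :: "'a::field" and e :: "'a^3^3"
  assumes three: "(3::'a) \<noteq> 0" and cnz: "w - w^2 \<noteq> 0"
    and e: "okubo_idempotent w e"
  shows "\<exists>S. det S \<noteq> 0 \<and> msmult (w - w^2) e ** S = S ** D1"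
proof -
  define c where "c = w - w^2"
  define k where "k = (w - w^2) / 3 * trace (e ** e)"
  have tr: "trace e = 0" and nz: "e \<noteq> 0" and ee: "okubo_mult w e e = e"
    using e by (auto simp: okubo_idempotent_def okubo_carrier_def)
  from ee have "msmult w (e ** e) - msmult (w^2) (e ** e) - msmult k (mat 1) = e"
    by (simp add: okubo_mult_def k_def)
  then have "msmult c (e ** e) = e + msmult k (mat 1)"
    by (simp add: ms_diff c_def algebra_simps)
  then have "msmult c e ** msmult c e = msmult c e + msmult (c*k) (mat 1)"
    by (simp add: ms_add ms_ms flip: ms_mult_l ms_mult_r)
  moreover have "trace (msmult c e) = 0" by (simp add: trace_ms tr)
  moreover have "msmult c e \<noteq> 0" using cnz nz by (simp add: c_def ms_zero)
  ultimately show ?thesis using diag_exists[OF three] unfolding c_def by blast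
qed

theorem theorem5p4:
  fixes w :: "'a::alg_closed_field"
  assumes char: "(3::'a) \<noteq> 0"
    and prim: "w ^ 3 = 1" "w \<noteq> 1"
    and e: "okubo_idempotent w e"
    and f: "okubo_idempotent w f"
  shows "\<exists>\<phi>. okubo_aut w \<phi> \<and> \<phi> e = f"
proof -
  define c where "c = w - w^2"
  have w0: "w \<noteq> 0" using prim by auto
  have "c = w * (1 - w)" by (simp add: c_def power2_eq_square algebra_simps)
  then have cnz: "c \<noteq> 0" using w0 prim(2) by simp
  obtain Se where Se: "det Se \<noteq> 0" "msmult c e ** Se = Se ** D1"
    using idem_diag[OF char cnz[unfolded c_def] e] unfolding c_def by blast
  obtain Sf where Sf: "det Sf \<noteq> 0" "msmult c f ** Sf = Sf ** D1"
    using idem_diag[OF char cnz[unfolded c_def] f] unfolding c_def by blast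
  obtain Se' where Se': "Se ** Se' = mat 1" "Se' ** Se = mat 1"
    using Se(1) invertible_det_nz[of Se] unfolding invertible_def by blast
  obtain Sf' where Sf': "Sf ** Sf' = mat 1" "Sf' ** Sf = mat 1"
    using Sf(1) invertible_det_nz[of Sf] unfolding invertible_def by blast
  define T where "T = Sf ** Se'"
  define T' where "T' = Se ** Sf'"
  have TT: "T ** T' = mat 1"
  proof -
    have "T ** T' = Sf ** (Se' ** Se) ** Sf'" by (simp add: T_def T'_def matrix_mul_assoc)
    then show ?thesis by (simp add: Se' Sf')
  qed
  have TT': "T' ** T = mat 1"
  proof -
    have "T' ** T = Se ** (Sf' ** Sf) ** Se'" by (simp add: T_def T'_def matrix_mul_assoc)
    then show ?thesis by (simp add: Se' Sf')
  qed
  have "msmult c (T ** e ** T') = T ** msmult c e ** T'"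
    by (simp flip: ms_mult_l ms_mult_r)
  also have "\<dots> = Sf ** Se' ** (msmult c e ** Se) ** Sf'"
    by (simp add: T_def T'_def matrix_mul_assoc)
  also have "\<dots> = Sf ** (Se' ** Se) ** D1 ** Sf'"
    by (simp add: Se(2) matrix_mul_assoc)
  also have "\<dots> = (msmult c f ** Sf) ** Sf'"
    by (simp add: Se' Sf(2))
  also have "\<dots> = msmult c f"
    by (simp add: Sf' flip: matrix_mul_assoc)
  finally have "T ** e ** T' = f" using ms_cancel[OF cnz] by blast
  then show ?thesis using conj_aut[OF TT TT', of w] by blast
qed

end
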